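(* Let $n\in\mathbb N$ and let $f(z)=\sum_{j\ge0}a_jz^j$ be extremal for $M_n$, normalized so that $a_0>0$ and $a_n>0$. Let $P(z)=a_n+2\sum_{j=1}^na_{n-j}z^j$. If $\mathrm{Re}\,P$ vanishes at $n$ distinct points $z_1,\dots,z_n\in\partial\mathbb D$, then \[f(z)\equiv a_0\prod_{j=1}^n(1-z_jz)^2 \pmod{z^{n+1}},\] $\prod_{j=1}^nz_j=(-1)^n$, and \[a_n=a_0\Big(2+\sum_{k=1}^{n-1}|e_k(z_1,\dots,z_n)|^2\Big),\] where $e_k$ is the $k$th elementary symmetric polynomial in $n$ variables.
   Context: $\mathbb D$ is the open unit disc; $\mathcal B_0=\{f$ holomorphic on $\mathbb D: 0<|f|\le1\}$; $M_n(f)=\mathrm{Re}\,a_n$; $f\in\mathcal B_0$ is extremal for $M_n$ if $M_n(f)\ge M_n(F)$ for all $F\in\mathcal B_0$. "$F\equiv G \pmod{z^{n+1}}$" means the Taylor coefficients of $F$ and $G$ at $0$ of orders $0,\dots,n$ agree. *)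

theory Defs
  imports "HOL-Complex_Analysis.Complex_Analysis" "HOL-Computational_Algebra.Polynomial"
begin

definition taylor_coeff :: "(complex \<Rightarrow> complex) \<Rightarrow> nat \<Rightarrow> complex" where
  "taylor_coeff f k = (deriv ^^ k) f 0 / of_nat (fact k)"

definition B0 :: "(complex \<Rightarrow> complex) set" where
  "B0 = {f. f holomorphic_on ball 0 1 \<and> (\<forall>z\<in>ball 0 1. 0 < norm (f z) \<and> norm (f z) \<le> 1)}"

definition M :: "nat \<Rightarrow> (complex \<Rightarrow> complex) \<Rightarrow> real" where
  "M n f = Re (taylor_coeff f n)"

definition extremal :: "nat \<Rightarrow> (complex \<Rightarrow> complex) \<Rightarrow> bool" where
  "extremal n f \<longleftrightarrow> f \<in> B0 \<and> (\<forall>F\<in>B0. M n F \<le> M n f)"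

definition esym :: "nat \<Rightarrow> nat \<Rightarrow> (nat \<Rightarrow> complex) \<Rightarrow> complex" where
  "esym n k z = (\<Sum>S\<in>{S. S \<subseteq> {1..n} \<and> card S = k}. \<Prod>j\<in>S. z j)"

end

theory Submission
  imports Defs
begin

lemma esym_0_k: "esym 0 k z = (if k = 0 then 1 else 0)"
proof -
  have "{S. S \<subseteq> {1..(0::nat)} \<and> card S = k} = (if k = 0 then {{}} else {})" by auto
  thus ?thesis by (simp add: esym_def)
qed

lemma esym_n_0: "esym n 0 z = 1"
proof -
  have "{S. S \<subseteq> {1..n} \<and> card S = 0} = {{}}" by (auto dest: finite_subset)
  thus ?thesis by (simp add: esym_def)
qed

lemma esym_Suc: "esym (Suc n) (Suc k) z = esym n (Suc k) z + z (Suc n) * esym n k z"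
proof -
  let ?A = "{S. S \<subseteq> {1..n} \<and> card S = Suc k}"
  let ?B = "{S. S \<subseteq> {1..n} \<and> card S = k}"
  have fin: "finite ?A" "finite ?B" by auto
  have inj: "inj_on (insert (Suc n)) ?B"
    by (rule inj_onI) (metis Set.set_insert atLeastAtMost_iff insert_ident mem_Collect_eq not_less_eq_eq subsetD le_refl)
  have eq: "{S. S \<subseteq> {1..Suc n} \<and> card S = Suc k} = ?A \<union> insert (Suc n) ` ?B"
  proof (rule set_eqI, rule iffI)
    fix S assume S: "S \<in> {S. S \<subseteq> {1..Suc n} \<and> card S = Suc k}"
    show "S \<in> ?A \<union> insert (Suc n) ` ?B"
    proof (cases "Suc n \<in> S")
      case True
      hence "S = insert (Suc n) (S - {Suc n})" by auto
      moreover have "S - {Suc n} \<in> ?B" using S True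
        by (auto simp: card_Diff_singleton finite_subset)
      ultimately show ?thesis by blast
    next
      case False
      hence "S \<in> ?A" using S by (auto; metis atLeastAtMost_iff le_Suc_eq subsetD)
      thus ?thesis by blast
    qed
  next
    fix S assume "S \<in> ?A \<union> insert (Suc n) ` ?B"
    then show "S \<in> {S. S \<subseteq> {1..Suc n} \<and> card S = Suc k}"
    proof
      assume "S \<in> ?A" thus ?thesis by auto
    next
      assume "S \<in> insert (Suc n) ` ?B"
      then obtain T where T: "T \<in> ?B" "S = insert (Suc n) T" by blast
      have "Suc n \<notin> T" using T by auto
      moreover have "finite T" using T by (auto dest: finite_subset)
      ultimately show ?thesis using T by auto
    qed
  qed
  have disj: "?A \<inter> insert (Suc n) ` ?B = {}" by auto
  have "esym (Suc n) (Suc k) z = (\<Sum>S\<in>?A. \<Prod>j\<in>S. z j) + (\<Sum>S\<in>insert (Suc n) ` ?B. \<Prod>j\<in>S. z j)"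
    unfolding esym_def eq using fin disj by (intro sum.union_disjoint) auto
  also have "(\<Sum>S\<in>insert (Suc n) ` ?B. \<Prod>j\<in>S. z j) = (\<Sum>T\<in>?B. \<Prod>j\<in>insert (Suc n) T. z j)"
    using inj by (rule sum.reindex[unfolded comp_def])
  also have "\<dots> = (\<Sum>T\<in>?B. z (Suc n) * (\<Prod>j\<in>T. z j))"
  proof (rule sum.cong[OF refl])
    fix T assume T: "T \<in> ?B"
    have "Suc n \<notin> T" using T by auto
    moreover have "finite T" using T by (auto dest: finite_subset)
    ultimately show "(\<Prod>j\<in>insert (Suc n) T. z j) = z (Suc n) * (\<Prod>j\<in>T. z j)" by simp
  qed
  also have "\<dots> = z (Suc n) * esym n k z" by (simp add: esym_def sum_distrib_left)
  finally show ?thesis by (simp add: esym_def)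
qed

lemma vieta: "coeff (\<Prod>j=1..n. [:1, - z j:]) k = (-1)^k * esym n k z"
proof (induction n arbitrary: k)
  case 0
  then show ?case by (cases k) (auto simp: esym_0_k)
next
  case (Suc n)
  have "(\<Prod>j=1..Suc n. [:1, - z j:]) = [:1, - z (Suc n):] * (\<Prod>j=1..n. [:1, - z j:])"
    by (simp add: prod.cl_ivl_Suc mult.commute)
  also have "\<dots> = (\<Prod>j=1..n. [:1, - z j:]) + pCons 0 (smult (- z (Suc n)) (\<Prod>j=1..n. [:1, - z j:]))"
    by (simp add: mult_pCons_left)
  finally have e: "(\<Prod>j=1..Suc n. [:1, - z j:]) = \<dots>" .
  show ?case
  proof (cases k)
    case 0 thus ?thesis using Suc.IH[of 0] by (simp add: e esym_n_0)
  next
    case (Suc m)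
    have "coeff (\<Prod>j=1..Suc n. [:1, - z j:]) (Suc m) = coeff (\<Prod>j=1..n. [:1, - z j:]) (Suc m)
        - z (Suc n) * coeff (\<Prod>j=1..n. [:1, - z j:]) m"
      unfolding e coeff_add coeff_pCons_Suc coeff_smult by simp
    also have "\<dots> = (-1)^Suc m * esym (Suc n) (Suc m) z"
      unfolding Suc.IH esym_Suc by (simp add: algebra_simps)
    finally show ?thesis using Suc by simp
  qed
qed


lemma esym_n_n: "esym n n z = (\<Prod>j=1..n. z j)"
proof -
  have "{S. S \<subseteq> {1..n} \<and> card S = n} = {{1..n}}"
  proof (rule set_eqI, rule iffI)
    fix S assume "S \<in> {S. S \<subseteq> {1..n} \<and> card S = n}"
    hence "S \<subseteq> {1..n}" "card S = card {1..n}" by auto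
    hence "S = {1..n}" using card_subset_eq by blast
    thus "S \<in> {{1..n}}" by simp
  qed auto
  thus ?thesis by (simp add: esym_def)
qed

lemma double_root_dvd:
  fixes p :: "complex poly"
  assumes "poly p a = 0" "poly (pderiv p) a = 0"
  shows "[:-a,1:]^2 dvd p"
proof -
  obtain r where r: "p = [:-a,1:] * r" using assms(1) poly_eq_0_iff_dvd by blast
  have "pderiv p = r + [:-a,1:] * pderiv r" unfolding r pderiv_mult by (simp add: pderiv_pCons)
  hence "poly r a = 0" using assms(2) by simp
  then obtain s where s: "r = [:-a,1:] * s" using poly_eq_0_iff_dvd by blast
  have "p = [:-a,1:]^2 * s" by (simp only: r s power2_eq_square mult.assoc)
  thus ?thesis by simp
qed

lemma prod_double_roots_dvd:
  fixes Q :: "complex poly"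
  assumes "finite S" "inj_on z S" "\<forall>j\<in>S. poly Q (z j) = 0 \<and> poly (pderiv Q) (z j) = 0"
  shows "(\<Prod>j\<in>S. [:-z j,1:]^2) dvd Q"
  using assms
proof (induction S rule: finite_induct)
  case empty thus ?case by simp
next
  case (insert k S)
  let ?D = "\<Prod>j\<in>S. [:-z j,1:]^2"
  have "?D dvd Q" using insert by auto
  then obtain R where R: "Q = ?D * R" by blast
  have Dnz: "poly ?D (z k) \<noteq> 0"
  proof -
    have "\<forall>j\<in>S. z k \<noteq> z j" using insert(2,4) by (auto simp: inj_on_def)
    thus ?thesis by (simp add: poly_prod insert(1))
  qed
  have q0: "poly Q (z k) = 0" "poly (pderiv Q) (z k) = 0" using insert(5) by auto
  have r0: "poly R (z k) = 0" using q0(1) Dnz unfolding R by simp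
  have "poly (pderiv Q) (z k) = poly (pderiv ?D) (z k) * poly R (z k) + poly ?D (z k) * poly (pderiv R) (z k)"
    unfolding R pderiv_mult by simp
  hence "poly (pderiv R) (z k) = 0" using q0(2) r0 Dnz by simp
  then obtain R2 where R2: "R = [:-z k,1:]^2 * R2" using double_root_dvd[OF r0] by blast
  have "Q = (\<Prod>j\<in>insert k S. [:-z j,1:]^2) * R2"
    unfolding R R2 using insert(1,2) by (simp add: mult_ac)
  thus ?case by simp
qed

definition Qp :: "(nat \<Rightarrow> complex) \<Rightarrow> nat \<Rightarrow> complex poly" where
  "Qp a n = monom (a n) n + (\<Sum>i=1..n. monom (a (n-i)) (n+i) + monom (cnj (a (n-i))) (n-i))"

definition Pf :: "(nat \<Rightarrow> complex) \<Rightarrow> nat \<Rightarrow> complex \<Rightarrow> complex" where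
  "Pf a n x = a n + 2 * (\<Sum>i=1..n. a (n-i) * x^i)"

lemma Qp_degree: "degree (Qp a n) \<le> 2*n"
  unfolding Qp_def
  by (intro degree_add_le degree_sum_le order.trans[OF degree_monom_le]) auto

lemma Qp_coeff:
  assumes "k \<le> n" shows "coeff (Qp a n) (n+k) = a (n-k)"
proof -
  have "coeff (Qp a n) (n+k) = (if k = 0 then a n else 0)
     + (\<Sum>i=1..n. (if i = k then a (n-i) else 0))"
    unfolding Qp_def coeff_add coeff_sum coeff_monom
    by (intro arg_cong2[where f="(+)"] sum.cong) auto
  also have "\<dots> = a (n-k)" using assms by (cases "k = 0") auto
  finally show ?thesis .
qed

lemma Qp_poly:
  assumes "Im (a n) = 0" "norm x = 1"
  shows "poly (Qp a n) x = x^n * of_real (Re (Pf a n x))"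
proof -
  have xc: "x * cnj x = 1" using assms(2) complex_norm_square[of x] by simp
  have pw: "x^n * cnj x ^ i = x^(n-i)" if "i \<le> n" for i
  proof -
    have "x^n * cnj x ^ i = x^(n-i) * (x * cnj x)^i"
      using that by (simp add: power_mult_distrib power_add[symmetric])
    thus ?thesis using xc by simp
  qed
  have an: "cnj (a n) = a n" using assms(1) by (simp add: complex_eq_iff)
  have "of_real (Re (Pf a n x)) = (Pf a n x + cnj (Pf a n x)) / 2"
    by (simp add: complex_add_cnj)
  also have "\<dots> = a n + (\<Sum>i=1..n. a (n-i) * x^i) + (\<Sum>i=1..n. cnj (a (n-i)) * cnj x ^ i)"
    unfolding Pf_def by (simp add: an)
  finally have "x^n * of_real (Re (Pf a n x)) = a n * x^n + (\<Sum>i=1..n. a (n-i) * (x^n * x^i)) + (\<Sum>i=1..n. cnj (a (n-i)) * (x^n * cnj x ^ i))"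
    by (simp add: algebra_simps sum_distrib_left)
  also have "\<dots> = a n * x^n + (\<Sum>i=1..n. a (n-i) * x^(n+i)) + (\<Sum>i=1..n. cnj (a (n-i)) * x^(n-i))"
    by (intro arg_cong2[where f="(+)"] sum.cong refl) (auto simp: pw power_add)
  also have "\<dots> = poly (Qp a n) x"
    unfolding Qp_def by (simp add: poly_sum poly_monom sum.distrib)
  finally show ?thesis ..
qed

lemma tc_fps: "g has_fps_expansion G \<Longrightarrow> taylor_coeff g k = fps_nth G k"
  using fps_nth_fps_expansion[of g G k] by (simp add: taylor_coeff_def)

lemma inverse_lin_fps:
  fixes b w :: complex
  assumes "b \<noteq> 0"
  shows "inverse (fps_const b - fps_const w * fps_X) = Abs_fps (\<lambda>k. w^k / b^(k+1))"
proof (rule fps_inverse_unique, rule fps_ext)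
  fix m
  define A where "A = Abs_fps (\<lambda>k. w^k / b^(k+1))"
  have e: "(fps_const b - fps_const w * fps_X) * A = fps_const b * A - fps_X * (fps_const w * A)"
    by (simp add: algebra_simps)
  have "fps_nth ((fps_const b - fps_const w * fps_X) * A) m
     = b * (w^m / b^(m+1)) - (if m = 0 then 0 else w * (w^(m-1) / b^m))"
    unfolding e by (cases m) (simp_all add: A_def)
  also have "\<dots> = fps_nth (1::complex fps) m"
    using assms by (cases m) (auto simp: field_simps)
  finally show "fps_nth ((fps_const b - fps_const w * fps_X) * Abs_fps (\<lambda>k. w^k / b^(k+1))) m = fps_nth (1::complex fps) m" 
    unfolding A_def .
qed

lemma gt_bound:
  fixes t :: real and u :: complex
  assumes "t > 0" "norm u < 1"
  shows "norm ((1 + of_real t) * (1 - u)) \<le> norm (1 + 2 * of_real t - u)"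
proof -
  define x where "x = Re u"
  define y where "y = Im u"
  have "(norm u)^2 < 1^2" by (rule power_strict_mono) (use assms in auto)
  hence xy: "x^2 + y^2 < 1" unfolding x_def y_def cmod_power2 by simp
  have x1: "1 + x > 0"
  proof -
    have "x^2 < 1" using xy zero_le_power2[of y] by linarith
    hence "\<bar>x\<bar> < 1" by (simp add: abs_square_less_1)
    thus ?thesis by linarith
  qed
  have key: "((1+t)^2) * ((1-x)^2 + y^2) \<le> (1+2*t-x)^2 + y^2"
  proof -
    have eq: "(1+2*t-x)^2 + y^2 - ((1+t)^2) * ((1-x)^2 + y^2)
         = 2*t^2*(1+x) + (1 - x^2 - y^2) * ((1+t)^2 - 1)"
      by (simp add: algebra_simps power2_eq_square)
    have h1: "2*t^2*(1+x) \<ge> 0" using x1 by simp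
    have h2: "(1 - x^2 - y^2) * ((1+t)^2 - 1) \<ge> 0" using xy assms(1)
    proof (intro mult_nonneg_nonneg)
      show "0 \<le> 1 - x^2 - y^2" using xy by linarith
      have "(1+t)^2 = 1 + 2*t + t^2" by (simp add: power2_eq_square algebra_simps)
      hence "1 \<le> (1+t)^2" using assms(1) zero_le_power2[of t] by linarith
      thus "0 \<le> (1+t)^2 - 1" by linarith
    qed
    show ?thesis using eq h1 h2 by linarith
  qed
  have n1: "(norm ((1 + of_real t) * (1 - u)))^2 = ((1+t)^2) * ((1-x)^2 + y^2)"
    unfolding norm_mult power_mult_distrib cmod_power2 x_def y_def by simp
  have n2: "(norm (1 + 2 * of_real t - u))^2 = (1+2*t-x)^2 + y^2"
    unfolding cmod_power2 x_def y_def by simp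
  have "(norm ((1 + of_real t) * (1 - u)))^2 \<le> (norm (1 + 2 * of_real t - u))^2"
    using key n1 n2 by simp
  thus ?thesis by (rule power2_le_imp_le) simp
qed

lemma variation_step:
  fixes t :: real
  assumes ext: "extremal n f" and w: "norm w = 1" and t: "t > 0"
  shows "Re (taylor_coeff f n - 2 * (1 + of_real t) *
           (\<Sum>i=0..n. taylor_coeff f (n-i) * w^i / (1 + 2 * of_real t)^(i+1))) \<le> 0"
proof -
  define c where "c = complex_of_real t"
  define a where "a = taylor_coeff f"
  have fB: "f \<in> B0" and fmax: "\<forall>F\<in>B0. M n F \<le> M n f" using ext by (auto simp: extremal_def)
  have fhol: "f holomorphic_on ball 0 1" and fb: "\<forall>z\<in>ball 0 1. 0 < norm (f z) \<and> norm (f z) \<le> 1"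
    using fB by (auto simp: B0_def)
  define g where "g = (\<lambda>z. (1 + c) * (1 - 2 * c * inverse (1 + 2 * c - w * z)))"
  define GG where "GG = fps_const (1 + c) * (1 - fps_const (2 * c) * inverse (fps_const (1 + 2 * c) - fps_const w * fps_X))"
  have "1 + 2 * c = of_real (1 + 2 * t)" by (simp add: c_def)
  moreover have "1 + 2 * t \<noteq> 0" using t by simp
  ultimately have c12: "1 + 2 * c \<noteq> 0" by (simp only: of_real_eq_0_iff) simp
  have l1: "(\<lambda>z. 1 + 2 * c - w * z) has_fps_expansion fps_const (1 + 2 * c) - fps_const w * fps_X"
    by (intro has_fps_expansion_diff has_fps_expansion_const has_fps_expansion_cmult_left has_fps_expansion_fps_X)
  have l2: "(\<lambda>z. inverse (1 + 2 * c - w * z)) has_fps_expansion inverse (fps_const (1 + 2 * c) - fps_const w * fps_X)"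
    by (rule has_fps_expansion_inverse[OF l1]) (simp add: c12)
  have l3: "(\<lambda>z. 2 * c * inverse (1 + 2 * c - w * z)) has_fps_expansion fps_const (2 * c) * inverse (fps_const (1 + 2 * c) - fps_const w * fps_X)"
    by (rule has_fps_expansion_cmult_left[OF l2])
  have l4: "(\<lambda>z. 1 - 2 * c * inverse (1 + 2 * c - w * z)) has_fps_expansion 1 - fps_const (2 * c) * inverse (fps_const (1 + 2 * c) - fps_const w * fps_X)"
    by (rule has_fps_expansion_diff[OF has_fps_expansion_1 l3])
  have gexp: "g has_fps_expansion GG"
    unfolding g_def GG_def by (rule has_fps_expansion_cmult_left[OF l4])
  have GGn: "fps_nth GG i = (1 + c) * ((if i = 0 then 1 else 0) - 2 * c * (w^i / (1 + 2*c)^(i+1)))" for i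
    unfolding GG_def inverse_lin_fps[OF c12] by simp
  define FF where "FF = fps_expansion f 0"
  have fexp: "f has_fps_expansion FF" unfolding FF_def
    by (rule has_fps_expansion_fps_expansion[OF _ _ fhol]) auto
  define F where "F = (\<lambda>z. g z * f z)"
  have Fexp: "F has_fps_expansion GG * FF" unfolding F_def by (intro has_fps_expansion_mult gexp fexp)
  have denom: "1 + 2 * c - w * z \<noteq> 0" and gnorm: "norm (g z) \<le> 1" and gnz: "g z \<noteq> 0"
    if z: "z \<in> ball 0 1" for z
  proof -
    have wz: "norm (w * z) < 1" using z w by (simp add: norm_mult)
    have "Re (w * z) < 1" using wz complex_Re_le_cmod[of "w*z"] by linarith
    hence re: "Re (1 + 2 * c - w * z) > 0" using t by (simp add: c_def)
    show d: "1 + 2 * c - w * z \<noteq> 0"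
    proof
      assume "1 + 2 * c - w * z = 0"
      hence "Re (1 + 2 * c - w * z) = 0" by (simp only: zero_complex.sel)
      with re show False by linarith
    qed
    have ge: "g z = (1 + c) * (1 - w * z) / (1 + 2 * c - w * z)"
      unfolding g_def using d by (simp add: field_simps)
    have nz1: "1 - w * z \<noteq> 0" using wz by auto
    have nz2: "1 + c \<noteq> 0"
    proof
      assume "1 + c = 0"
      hence "Re (1 + c) = 0" by (simp only: zero_complex.sel)
      with t show False by (simp add: c_def)
    qed
    show "g z \<noteq> 0" using d ge nz1 nz2 by simp
    show "norm (g z) \<le> 1" unfolding ge c_def using gt_bound[OF t wz] d
      by (simp add: norm_divide divide_le_eq_1)
  qed
  have FB: "F \<in> B0"
  proof -
    have "g holomorphic_on ball 0 1" unfolding g_def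
      by (intro holomorphic_intros) (use denom in auto)
    hence "F holomorphic_on ball 0 1" unfolding F_def using fhol by (intro holomorphic_intros)
    moreover have "0 < norm (F z) \<and> norm (F z) \<le> 1" if "z \<in> ball 0 1" for z
    proof -
      have "norm (F z) = norm (g z) * norm (f z)" by (simp add: F_def norm_mult)
      thus ?thesis using gnorm[OF that] gnz[OF that] fb that
        by (auto intro: mult_le_one)
    qed
    ultimately show ?thesis by (simp add: B0_def)
  qed
  have "M n F \<le> M n f" using fmax FB by blast
  hence ineq: "Re (taylor_coeff F n) \<le> Re (a n)" by (simp add: M_def a_def)
  have "taylor_coeff F n = (\<Sum>i=0..n. fps_nth GG i * a (n - i))"
    unfolding tc_fps[OF Fexp] fps_mult_nth a_def tc_fps[OF fexp] ..
  also have "\<dots> = (\<Sum>i=0..n. (1 + c) * (if i = 0 then a (n-i) else 0))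
       - (\<Sum>i=0..n. 2 * c * (1 + c) * (a (n-i) * w^i / (1 + 2*c)^(i+1)))"
    unfolding GGn sum_subtractf[symmetric] by (intro sum.cong) (auto simp: algebra_simps)
  also have "\<dots> = (1 + c) * a n - 2 * c * ((1 + c) * (\<Sum>i=0..n. a (n-i) * w^i / (1 + 2*c)^(i+1)))"
  proof -
    have "(\<Sum>i=0..n. (if i = 0 then a (n-i) else 0)) = a n" by (simp add: sum.delta)
    hence "(\<Sum>i=0..n. (1 + c) * (if i = 0 then a (n-i) else 0)) = (1 + c) * a n"
      by (simp add: sum_distrib_left[symmetric])
    thus ?thesis by (simp add: sum_distrib_left mult.assoc)
  qed
  finally have "Re ((1 + c) * a n - 2 * c * ((1 + c) * (\<Sum>i=0..n. a (n-i) * w^i / (1 + 2*c)^(i+1)))) \<le> Re (a n)"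
    using ineq by simp
  hence "t * Re (a n - 2 * ((1 + c) * (\<Sum>i=0..n. a (n-i) * w^i / (1 + 2*c)^(i+1)))) \<le> 0"
    by (simp add: c_def algebra_simps)
  hence "Re (a n - 2 * ((1 + c) * (\<Sum>i=0..n. a (n-i) * w^i / (1 + 2*c)^(i+1)))) \<le> 0"
    using t by (simp add: mult_le_0_iff)
  thus ?thesis by (simp only: a_def c_def mult.assoc)
qed

lemma variation:
  assumes ext: "extremal n f" and w: "norm w = 1"
  shows "Re (Pf (taylor_coeff f) n w) \<ge> 0"
proof -
  define a where "a = taylor_coeff f"
  define h where "h = (\<lambda>t::real. Re (a n - 2 * (1 + of_real t) *
           (\<Sum>i=0..n. a (n-i) * w^i / (1 + 2 * of_real t)^(i+1))))"
  have lim: "(h \<longlongrightarrow> h 0) (at_right 0)" unfolding h_def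
    by (intro tendsto_intros) auto
  have ev: "eventually (\<lambda>t. h t \<le> 0) (at_right 0)"
  proof -
    have "eventually (\<lambda>t::real. t > 0) (at_right 0)" by (simp add: eventually_at_right_less)
    thus ?thesis
      by eventually_elim (use variation_step[OF ext w] in \<open>simp add: h_def a_def\<close>)
  qed
  have "h 0 \<le> 0" using tendsto_upperbound[OF lim ev] by simp
  moreover have h0: "h 0 = Re (a n - 2 * (\<Sum>i=0..n. a (n-i) * w^i))" unfolding h_def by simp
  ultimately have "Re (a n - 2 * (\<Sum>i=0..n. a (n-i) * w^i)) \<le> 0" by (simp only: h0)
  moreover have "(\<Sum>i=0..n. a (n-i) * w^i) = a n + (\<Sum>i=1..n. a (n-i) * w^i)"
    by (simp add: sum.atLeast_Suc_atMost)
  moreover have "a n - 2 * (a n + (\<Sum>i=1..n. a (n-i) * w^i)) = - Pf a n w"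
    by (simp add: Pf_def algebra_simps)
  ultimately have "Re (- Pf a n w) \<le> 0" by (simp only:)
  thus ?thesis by (simp add: a_def)
qed

lemma Qp_double_root:
  assumes an: "Im (a n) = 0" and nonneg: "\<forall>x. norm x = 1 \<longrightarrow> Re (Pf a n x) \<ge> 0"
    and z: "norm z = 1" and z0: "Re (Pf a n z) = 0"
  shows "poly (Qp a n) z = 0 \<and> poly (pderiv (Qp a n)) z = 0"
proof -
  define Q where "Q = Qp a n"
  have Qz: "poly Q z = 0" unfolding Q_def using Qp_poly[of a n, OF an z] z0 by simp
  define g where "g = (\<lambda>s. z * exp (\<i> * s))"
  define e where "e = (\<lambda>s. cnj z ^ n * exp (- (\<i> * of_nat n * s)))"
  define \<Psi> where "\<Psi> = (\<lambda>s. poly Q (g s) * e s)"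
  have gd: "(g has_field_derivative z * \<i>) (at 0)" unfolding g_def
    by (auto intro!: derivative_eq_intros)
  have g0: "g 0 = z" by (simp add: g_def)
  define D2 where "D2 = cnj z ^ n * (- (\<i> * of_nat n))"
  have ed: "(e has_field_derivative D2) (at 0)" unfolding e_def D2_def
    by (auto intro!: derivative_eq_intros)
  have pd: "((\<lambda>s. poly Q (g s)) has_field_derivative poly (pderiv Q) z * (z * \<i>)) (at 0)"
    using DERIV_chain2[OF poly_DERIV gd] g0 by simp
  define L where "L = poly (pderiv Q) z * (z * \<i>) * cnj z ^ n"
  have "(\<Psi> has_field_derivative poly (pderiv Q) z * (z * \<i>) * e 0 + D2 * poly Q (g 0)) (at 0)"
    unfolding \<Psi>_def by (rule DERIV_mult[OF pd ed])
  hence "(\<Psi> has_field_derivative L) (at (of_real 0))" by (simp add: L_def e_def g0 Qz)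
  hence vd: "((\<lambda>x. \<Psi> (of_real x)) has_vector_derivative L) (at 0)"
    by (rule has_vector_derivative_real_field)
  have zc: "z * cnj z = 1" using z complex_norm_square[of z] by simp
  have val: "\<Psi> (of_real \<theta>) = of_real (Re (Pf a n (g (of_real \<theta>))))" for \<theta> :: real
  proof -
    have ng: "norm (g (of_real \<theta>)) = 1" using z by (simp add: g_def norm_mult)
    have "g (of_real \<theta>) ^ n * e (of_real \<theta>) = (z * cnj z) ^ n * (exp (\<i> * of_real \<theta>) ^ n * exp (- (\<i> * of_nat n * of_real \<theta>)))"
      by (simp add: g_def e_def power_mult_distrib mult_ac)
    also have "exp (\<i> * of_real \<theta>) ^ n = exp (\<i> * of_nat n * of_real \<theta>)"
      by (simp add: exp_of_nat_mult[symmetric] mult_ac)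
    also have "exp (\<i> * of_nat n * of_real \<theta>) * exp (- (\<i> * of_nat n * of_real \<theta>)) = 1"
      by (simp add: exp_minus)
    finally have "g (of_real \<theta>) ^ n * e (of_real \<theta>) = 1" using zc by simp
    thus ?thesis unfolding \<Psi>_def Q_def Qp_poly[of a n, OF an ng] by (simp add: mult_ac)
  qed
  have "((\<lambda>x. Im (\<Psi> (of_real x))) has_field_derivative Im L) (at 0)"
    by (rule has_field_derivative_Im[OF vd])
  moreover have "(\<lambda>x. Im (\<Psi> (of_real x))) = (\<lambda>x. 0)" using val by simp
  ultimately have "((\<lambda>x::real. 0) has_field_derivative Im L) (at 0)" by simp
  hence imL: "Im L = 0" using DERIV_unique[OF _ DERIV_const] by blast
  have reD: "((\<lambda>x. Re (\<Psi> (of_real x))) has_field_derivative Re L) (at 0)"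
    by (rule has_field_derivative_Re[OF vd])
  have "\<forall>y. \<bar>0 - y\<bar> < 1 \<longrightarrow> Re (\<Psi> (of_real 0)) \<le> Re (\<Psi> (of_real y))"
  proof (intro allI impI)
    fix y :: real
    have "Re (\<Psi> (of_real 0)) = 0" using val[of 0] z0 by (simp add: g_def)
    moreover have "Re (\<Psi> (of_real y)) \<ge> 0" using val[of y] nonneg z
      by (simp add: g_def norm_mult)
    ultimately show "Re (\<Psi> (of_real 0)) \<le> Re (\<Psi> (of_real y))" by simp
  qed
  hence reL: "Re L = 0" using DERIV_local_min[OF reD, of 1] by simp
  have "L = 0" using imL reL by (simp add: complex_eq_iff)
  moreover have "z \<noteq> 0" using z by auto
  ultimately have "poly (pderiv Q) z = 0" by (simp add: L_def)
  thus ?thesis using Qz by (simp add: Q_def)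
qed

lemma infinite_unit_circle: "infinite (sphere (0::complex) 1)"
proof
  assume fin: "finite (sphere (0::complex) 1)"
  have "connected (sphere (0::complex) 1)" by (rule connected_sphere) simp
  hence "sphere (0::complex) 1 = {} \<or> (\<exists>a. sphere (0::complex) 1 = {a})"
    using connected_finite_iff_sing fin by blast
  moreover have "1 \<in> sphere (0::complex) 1" "-1 \<in> sphere (0::complex) 1" by auto
  ultimately show False by (metis empty_iff singletonD one_neq_neg_one)
qed

lemma exists_avoid:
  fixes A :: "complex set" assumes "finite A"
  obtains w where "norm w = 1" "w \<notin> A"
proof -
  have "infinite (sphere (0::complex) 1 - A)" using infinite_unit_circle assms by simp
  hence "sphere (0::complex) 1 - A \<noteq> {}" by (metis finite.emptyI)
  then obtain w where "w \<in> sphere 0 1" "w \<notin> A" by blast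
  thus ?thesis using that by simp
qed

lemma sq_unit:
  fixes w z :: complex assumes "norm w = 1" "norm z = 1"
  shows "(w - z)^2 = - (w * z) * of_real ((norm (w - z))^2)"
proof -
  have w1: "w * cnj w = 1" using assms(1) complex_norm_square[of w] by simp
  have z1: "z * cnj z = 1" using assms(2) complex_norm_square[of z] by simp
  have N: "of_real ((norm (w - z))^2) = (w - z) * (cnj w - cnj z)"
    using complex_norm_square[of "w - z"] by simp
  have "- (w * z) * of_real ((norm (w - z))^2) = - (w * z) * ((w - z) * (cnj w - cnj z))"
    by (simp only: N)
  also have "\<dots> = - (w - z) * (z * (w * cnj w) - w * (z * cnj z))"
    by (simp add: algebra_simps)
  also have "\<dots> = (w - z)^2" using w1 z1 by (simp add: power2_eq_square algebra_simps)
  finally show ?thesis ..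
qed

lemma esym_compl:
  assumes z: "\<forall>j\<in>{1..n}. norm (z j) = 1" and k: "k \<le> n"
  shows "esym n (n - k) z = esym n n z * cnj (esym n k z)"
proof -
  let ?I = "{1..n}"
  have "esym n (n - k) z = (\<Sum>S\<in>{S. S \<subseteq> ?I \<and> card S = k}. \<Prod>j\<in>?I - S. z j)"
    unfolding esym_def
  proof (rule sum.reindex_bij_witness[where i="\<lambda>S. ?I - S" and j="\<lambda>S. ?I - S"])
    fix S assume S: "S \<in> {S. S \<subseteq> ?I \<and> card S = k}"
    show "?I - (?I - S) = S" using S by auto
    have "finite S" using S by (auto dest: finite_subset)
    thus "?I - S \<in> {S. S \<subseteq> ?I \<and> card S = n - k}" using S by (auto simp: card_Diff_subset)
  next
    fix S assume S: "S \<in> {S. S \<subseteq> ?I \<and> card S = n - k}"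
    show "?I - (?I - S) = S" using S by auto
    have "finite S" using S by (auto dest: finite_subset)
    thus "?I - S \<in> {S. S \<subseteq> ?I \<and> card S = k}" using S k by (auto simp: card_Diff_subset)
  next
    fix S assume S: "S \<in> {S. S \<subseteq> ?I \<and> card S = n - k}"
    hence "?I - (?I - S) = S" by auto
    thus "(\<Prod>j\<in>?I - (?I - S). z j) = (\<Prod>j\<in>S. z j)" by simp
  qed
  also have "\<dots> = (\<Sum>S\<in>{S. S \<subseteq> ?I \<and> card S = k}. (\<Prod>j\<in>?I. z j) * (\<Prod>j\<in>S. cnj (z j)))"
  proof (rule sum.cong[OF refl])
    fix S assume S: "S \<in> {S. S \<subseteq> ?I \<and> card S = k}"
    have nz: "\<forall>j\<in>?I. z j \<noteq> 0" using z by auto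
    have "(\<Prod>j\<in>?I. z j) = (\<Prod>j\<in>?I - S. z j) * (\<Prod>j\<in>S. z j)"
      using S by (metis (no_types, lifting) finite_atLeastAtMost mem_Collect_eq prod.subset_diff)
    moreover have "(\<Prod>j\<in>S. z j) * (\<Prod>j\<in>S. cnj (z j)) = 1"
    proof -
      have "(\<Prod>j\<in>S. z j) * (\<Prod>j\<in>S. cnj (z j)) = (\<Prod>j\<in>S. z j * cnj (z j))"
        by (simp add: prod.distrib)
      also have "\<dots> = (\<Prod>j\<in>S. 1)"
      proof (rule prod.cong[OF refl])
        fix j assume "j \<in> S"
        hence "norm (z j) = 1" using S z by auto
        thus "z j * cnj (z j) = 1" using complex_norm_square[of "z j"] by simp
      qed
      finally show ?thesis by simp
    qed
    ultimately show "(\<Prod>j\<in>?I - S. z j) = (\<Prod>j\<in>?I. z j) * (\<Prod>j\<in>S. cnj (z j))"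
      by (metis mult.assoc mult.right_neutral)
  qed
  also have "\<dots> = esym n n z * cnj (esym n k z)"
    by (simp add: esym_n_n esym_def sum_distrib_left)
  finally show ?thesis .
qed

theorem theorem5:
  fixes f :: "complex \<Rightarrow> complex" and n :: nat and z :: "nat \<Rightarrow> complex"
  assumes "n \<ge> 1"
    and "extremal n f"
    and "Im (taylor_coeff f 0) = 0" and "Re (taylor_coeff f 0) > 0"
    and "Im (taylor_coeff f n) = 0" and "Re (taylor_coeff f n) > 0"
    and "inj_on z {1..n}"
    and "\<forall>j\<in>{1..n}. norm (z j) = 1"
    and "\<forall>j\<in>{1..n}. Re (taylor_coeff f n
            + 2 * (\<Sum>i=1..n. taylor_coeff f (n - i) * z j ^ i)) = 0"
  shows "(\<forall>k\<le>n. taylor_coeff f k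
            = coeff (smult (taylor_coeff f 0) (\<Prod>j=1..n. [:1, - z j:] ^ 2)) k)
         \<and> (\<Prod>j=1..n. z j) = (-1) ^ n
         \<and> taylor_coeff f n
           = taylor_coeff f 0 * of_real (2 + (\<Sum>k=1..n-1. (norm (esym n k z))^2))"
proof -
  note n1 = assms(1) and ext = assms(2) and a0i = assms(3) and a0r = assms(4)
    and ani = assms(5) and inj = assms(7) and zn = assms(8) and zr = assms(9)
  define a where "a = taylor_coeff f"
  define Q where "Q = Qp a n"
  define D where "D = (\<Prod>j=1..n. [:-z j, 1:]^2)"
  have an: "Im (a n) = 0" using ani by (simp add: a_def)
  have nonneg: "\<forall>x. norm x = 1 \<longrightarrow> Re (Pf a n x) \<ge> 0"
    using variation[OF ext] by (simp add: a_def)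
  have roots: "\<forall>j\<in>{1..n}. poly Q (z j) = 0 \<and> poly (pderiv Q) (z j) = 0"
  proof
    fix j assume j: "j \<in> {1..n}"
    have "Re (Pf a n (z j)) = 0" using zr j by (simp add: Pf_def a_def)
    thus "poly Q (z j) = 0 \<and> poly (pderiv Q) (z j) = 0"
      unfolding Q_def using Qp_double_root[OF an nonneg] zn j by blast
  qed
  have "D dvd Q" unfolding D_def by (rule prod_double_roots_dvd[OF _ inj roots]) simp
  then obtain R where QDR: "Q = D * R" by blast
  have Dnz: "D \<noteq> 0" unfolding D_def by (simp add: prod_zero_iff)
  have degD: "degree D = 2 * n"
  proof -
    have "degree D = (\<Sum>j=1..n. degree ([:-z j, 1:]^2))"
      unfolding D_def by (rule degree_prod_eq_sum_degree) simp
    also have "\<dots> = (\<Sum>j=1..n. 2)" by (simp add: degree_power_eq)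
    finally show ?thesis by simp
  qed
  have lcD: "lead_coeff D = 1" unfolding D_def by (simp add: lead_coeff_prod lead_coeff_power)
  have cQ: "coeff Q (n + k) = a (n - k)" if "k \<le> n" for k
    unfolding Q_def by (rule Qp_coeff[OF that])
  have a00: "a 0 \<noteq> 0" using a0r by (auto simp: a_def)
  have "coeff Q (2 * n) = a 0" using cQ[of n] by (simp add: mult_2)
  hence Qnz: "Q \<noteq> 0" using a00 by auto
  hence Rnz: "R \<noteq> 0" using QDR by auto
  have "degree Q = 2 * n + degree R" using QDR Dnz Rnz degD by (simp add: degree_mult_eq)
  hence "degree R = 0" using Qp_degree[of a n] unfolding Q_def by simp
  hence "R = [:coeff R 0:]" by (rule degree_0_id[symmetric])
  hence "Q = D * [:coeff R 0:]" using QDR by simp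
  hence Qs: "Q = smult (coeff R 0) D" by simp
  have "coeff Q (2 * n) = coeff R 0" using lcD degD by (simp add: Qs)
  hence "coeff R 0 = a 0" using cQ[of n] by (simp add: mult_2)
  hence QaD: "Q = smult (a 0) D" using Qs by simp
  have rz: "reflect_poly [:- z j, 1:] = [:1, - z j:]" for j
    by (simp add: reflect_poly_def)
  have reflD: "reflect_poly D = (\<Prod>j=1..n. [:1, - z j:] ^ 2)"
    unfolding D_def by (simp add: reflect_poly_prod reflect_poly_power rz)
  have cD: "coeff (reflect_poly D) k = coeff D (2 * n - k)" if "k \<le> n" for k
    using that degD by (simp add: coeff_reflect_poly)
  have claim1: "\<forall>k\<le>n. a k = coeff (smult (a 0) (\<Prod>j=1..n. [:1, - z j:] ^ 2)) k"
  proof (intro allI impI)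
    fix k assume k: "k \<le> n"
    have "a k = coeff Q (n + (n - k))" using cQ[of "n - k"] k by simp
    also have "n + (n - k) = 2 * n - k" using k by simp
    finally have "a k = a 0 * coeff D (2 * n - k)" by (simp add: QaD)
    moreover have "coeff (smult (a 0) (\<Prod>j=1..n. [:1, - z j:] ^ 2)) k = a 0 * coeff D (2 * n - k)"
      by (simp only: reflD[symmetric] coeff_smult cD[OF k])
    ultimately show "a k = coeff (smult (a 0) (\<Prod>j=1..n. [:1, - z j:] ^ 2)) k" by (simp only:)
  qed
  obtain w where w: "norm w = 1" "w \<notin> z ` {1..n}"
    using exists_avoid[of "z ` {1..n}"] by auto
  have wz: "w \<noteq> z j" if "j \<in> {1..n}" for j using w(2) that by auto
  define Pr where "Pr = (\<Prod>j=1..n. (norm (w - z j))^2)"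
  have Prpos: "Pr > 0" unfolding Pr_def
    by (rule prod_pos) (use wz in auto)
  have "poly Q w = a 0 * (\<Prod>j=1..n. (w - z j)^2)"
    by (simp add: QaD D_def poly_prod)
  also have "(\<Prod>j=1..n. (w - z j)^2) = (\<Prod>j=1..n. w * (- z j) * of_real ((norm (w - z j))^2))"
    using sq_unit[OF w(1)] zn by (intro prod.cong) auto
  also have "\<dots> = (\<Prod>j=1..n. w) * (\<Prod>j=1..n. - z j) * (\<Prod>j=1..n. of_real ((norm (w - z j))^2))"
    by (simp only: prod.distrib)
  also have "(\<Prod>j=1..n. w) = w ^ n" by simp
  also have "(\<Prod>j=1..n. of_real ((norm (w - z j))^2)) = (of_real Pr :: complex)"
    by (simp only: Pr_def of_real_prod)
  finally have e1: "poly Q w = a 0 * (w ^ n * (\<Prod>j=1..n. - z j) * of_real Pr)" .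
  have e2: "poly Q w = w ^ n * of_real (Re (Pf a n w))"
    unfolding Q_def by (rule Qp_poly[of a n, OF an w(1)])
  have wn: "w ^ n \<noteq> 0" using w(1) by auto
  have a0c: "a 0 = of_real (Re (a 0))" using a0i by (simp add: a_def complex_eq_iff)
  have a0p: "Re (a 0) > 0" using a0r by (simp add: a_def)
  have "of_real (Re (Pf a n w)) = a 0 * (\<Prod>j=1..n. - z j) * of_real Pr"
    using e1 e2 wn w(1) by (auto simp: mult_ac)
  hence "(\<Prod>j=1..n. - z j) = of_real (Re (Pf a n w) / (Re (a 0) * Pr))"
    using a0p Prpos by (subst (asm) a0c) (simp add: field_simps)
  moreover have "Re (Pf a n w) / (Re (a 0) * Pr) \<ge> 0"
    using nonneg w(1) a0p Prpos by simp
  moreover have "norm (\<Prod>j=1..n. - z j) = 1"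
  proof -
    have "norm (\<Prod>j=1..n. - z j) = (\<Prod>j=1..n. norm (- z j))" by (rule prod_norm[symmetric])
    also have "\<dots> = (\<Prod>j=1..n. 1)" using zn by (intro prod.cong) auto
    finally show ?thesis by simp
  qed
  ultimately have pm1: "(\<Prod>j=1..n. - z j) = 1"
  proof -
    fix s :: real
    assume P: "(\<Prod>j=1..n. - z j) = of_real (Re (Pf a n w) / (Re (a 0) * Pr))"
      and s0: "Re (Pf a n w) / (Re (a 0) * Pr) \<ge> 0" and N: "norm (\<Prod>j=1..n. - z j) = 1"
    have "\<bar>Re (Pf a n w) / (Re (a 0) * Pr)\<bar> = 1" using N unfolding P norm_of_real .
    hence s1: "Re (Pf a n w) / (Re (a 0) * Pr) = 1" using s0 by linarith
    show ?thesis unfolding P s1 by simp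
  qed
  have "(\<Prod>j=1..n. - z j) = (-1) ^ n * (\<Prod>j=1..n. z j)"
  proof -
    have "(\<Prod>j=1..n. - z j) = (\<Prod>j=1..n. (-1) * z j)" by simp
    also have "\<dots> = (-1) ^ n * (\<Prod>j=1..n. z j)" by (simp only: prod.distrib) simp
    finally show ?thesis .
  qed
  hence "(-1) ^ n * (\<Prod>j=1..n. z j) = 1" using pm1 by simp
  hence "(-1) ^ n * ((-1) ^ n * (\<Prod>j=1..n. z j)) = (-1::complex) ^ n" by simp
  hence claim2: "(\<Prod>j=1..n. z j) = (-1) ^ n"
    by (simp add: mult.assoc[symmetric] power_add[symmetric])
  define E where "E = (\<Prod>j=1..n. [:1, - z j:])"
  have en: "esym n n z = (-1) ^ n" using claim2 by (simp add: esym_n_n)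
  have "a n = coeff Q (n + 0)" using cQ[of 0] by simp
  also have "\<dots> = a 0 * coeff (reflect_poly D) n" using cD[of n] by (simp add: QaD)
  also have "reflect_poly D = E * E" unfolding reflD E_def
    by (simp only: prod_power_distrib[symmetric] power2_eq_square prod.distrib)
  also have "coeff (E * E) n = (\<Sum>i\<le>n. coeff E i * coeff E (n - i))" by (rule coeff_mult)
  also have "\<dots> = (\<Sum>i\<le>n. of_real ((norm (esym n i z))^2))"
  proof (rule sum.cong[OF refl])
    fix i assume i: "i \<in> {..n}"
    have "coeff E i * coeff E (n - i) = ((-1) ^ i * (-1) ^ (n - i)) * (esym n i z * esym n (n - i) z)"
      unfolding E_def vieta by (simp add: mult_ac)
    also have "(-1) ^ i * (-1) ^ (n - i) = ((-1::complex) ^ n)"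
      using i by (simp add: power_add[symmetric])
    also have "esym n (n - i) z = (-1) ^ n * cnj (esym n i z)"
      using esym_compl[OF zn, of i] i en by simp
    finally have c1: "coeff E i * coeff E (n - i) = (-1) ^ n * (esym n i z * ((-1) ^ n * cnj (esym n i z)))" .
    have nsq: "esym n i z * cnj (esym n i z) = of_real ((norm (esym n i z))^2)"
      using complex_norm_square[of "esym n i z"] by simp
    have pp: "(-1::complex) ^ n * (-1) ^ n = 1" by (simp add: power_add[symmetric])
    have "coeff E i * coeff E (n - i) = ((-1) ^ n * (-1) ^ n) * (esym n i z * cnj (esym n i z))"
      unfolding c1 by (simp only: mult_ac)
    thus "coeff E i * coeff E (n - i) = of_real ((norm (esym n i z))^2)"
      unfolding pp nsq by simp
  qed
  also have "\<dots> = of_real (2 + (\<Sum>k=1..n-1. (norm (esym n k z))^2))"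
  proof -
    obtain m where m: "n = Suc m" using n1 by (cases n) auto
    have "(\<Sum>i\<le>n. (norm (esym n i z))^2) = (\<Sum>i=0..m. (norm (esym n i z))^2) + (norm (esym n n z))^2"
      by (simp add: m atMost_atLeast0)
    also have "(\<Sum>i=0..m. (norm (esym n i z))^2) = (norm (esym n 0 z))^2 + (\<Sum>i=1..m. (norm (esym n i z))^2)"
      by (simp add: sum.atLeast_Suc_atMost)
    finally have "(\<Sum>i\<le>n. (norm (esym n i z))^2) = 2 + (\<Sum>k=1..n-1. (norm (esym n k z))^2)"
      using en by (simp add: esym_n_0 m norm_power)
    hence "of_real (\<Sum>i\<le>n. (norm (esym n i z))^2) = (of_real (2 + (\<Sum>k=1..n-1. (norm (esym n k z))^2)) :: complex)" by (simp only:)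
    thus ?thesis by (simp only: of_real_sum)
  qed
  finally have claim3: "a n = a 0 * of_real (2 + (\<Sum>k=1..n-1. (norm (esym n k z))^2))" .
  show ?thesis using claim1 claim2 claim3 unfolding a_def by blast
qed

end
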